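(* Define sequences of primes as follows. For a prime $a$, let $S(a)=(s(1),s(2),\dots)$ be the sequence with $s(1)=a$ and, for $j\ge 2$, $s(j)$ the largest prime less than $2s(j-1)$. Put $p^{(1)}=2$ and $B_1=S(2)$; inductively, for $k\ge 2$, let $p^{(k)}$ be the smallest prime not belonging to $B_1\cup\dots\cup B_{k-1}$, and put $B_k=S(p^{(k)})$. Call a prime $p$ an RPR-prime if, with $q$ the smallest prime greater than $p/2$, the open interval $(p,2q)$ contains a prime; let $(RPR)_n$ denote the $n$-th RPR-prime in increasing order. Then for every $n\ge 1$, $p^{(n)}=(RPR)_n$.
   Context: Equivalently (for odd $p=p_n$, $p_k$ the $k$-th prime), $p$ is an RPR-prime iff all integers $\frac{p+1}{2},\frac{p+3}{2},\dots,\frac{p_{n+1}-1}{2}$ are composite. The first RPR-primes are $2,11,17,29,41,47,59,67,71,97,101,107,109,127,\dots$. *)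

theory Defs
  imports "HOL-Computational_Algebra.Primes" "HOL-Library.Infinite_Set"
begin

definition largest_prime_below :: "nat \<Rightarrow> nat" where
  "largest_prime_below m = (GREATEST p. prime p \<and> p < m)"

(* S(a) = (s(1), s(2), ...), stored 0-based: seqS a j = s(j+1) *)
fun seqS :: "nat \<Rightarrow> nat \<Rightarrow> nat" where
  "seqS a 0 = a"
| "seqS a (Suc j) = largest_prime_below (2 * seqS a j)"

(* Ucov k = B_1 \<union> ... \<union> B_k ; B_{k+1} = S(p^(k+1)) with p^(k+1) the least prime not in Ucov k *)
fun Ucov :: "nat \<Rightarrow> nat set" where
  "Ucov 0 = {}"
| "Ucov (Suc k) = Ucov k \<union> range (seqS (LEAST p. prime p \<and> p \<notin> Ucov k))"

(* p^(k) for k \<ge> 1 : smallest prime not in B_1 \<union> ... \<union> B_{k-1}  (gives p^(1) = 2) *)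
definition pseq :: "nat \<Rightarrow> nat" where
  "pseq k = (LEAST p. prime p \<and> p \<notin> Ucov (k - 1))"

definition RPR_prime :: "nat \<Rightarrow> bool" where
  "RPR_prime p \<longleftrightarrow> prime p \<and>
     (let q = (LEAST q. prime q \<and> 2 * q > p)
      in \<exists>r. prime r \<and> p < r \<and> r < 2 * q)"

(* q > p/2 is written 2*q > p (exact over nat) *)
definition RPR :: "nat \<Rightarrow> nat" where
  "RPR n = enumerate {p. RPR_prime p} (n - 1)"

end

theory Submission
  imports Defs Complex_Main
begin

lemma prod_primes_dvd:
  fixes x :: nat
  assumes "finite S" "\<And>p. p \<in> S \<Longrightarrow> prime p \<and> p dvd x"
  shows "\<Prod>S dvd x"
  using assms
proof (induction S rule: finite_induct)
  case empty then show ?case by simp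
next
  case (insert p S)
  have "\<Prod>S dvd x" using insert by auto
  moreover have pp: "prime p" "p dvd x" using insert by auto
  moreover have "coprime p (\<Prod>S)"
  proof -
    have "\<not> p dvd \<Prod>S"
    proof
      assume "p dvd \<Prod>S"
      then obtain q where "q \<in> S" "p dvd q" using pp(1) insert.hyps(1)
        by (metis prime_dvd_prod_iff)
      then show False using insert pp(1) by (metis insertCI primes_dvd_imp_eq)
    qed
    then show ?thesis using pp(1) by (simp add: prime_imp_coprime)
  qed
  ultimately show ?case using insert.hyps by (simp add: divides_mult)
qed

definition primorial :: "nat \<Rightarrow> nat" where
  "primorial x = \<Prod>{p. prime p \<and> p \<le> x}"

lemma fin_primes_le: "finite {p::nat. prime p \<and> p \<le> x}" by auto

lemma primorial_bound: "primorial x \<le> 4 ^ x"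
proof (induction x rule: less_induct)
  case (less x)
  show ?case
  proof (cases "x \<le> 2")
    case True
    show ?thesis
    proof (cases "x = 2")
      case True
      have "{p::nat. prime p \<and> p \<le> 2} = {2}"
        using prime_ge_2_nat by (auto simp: le_Suc_eq dest: prime_ge_2_nat)
      then show ?thesis unfolding primorial_def using True by simp
    next
      case False
      with \<open>x \<le> 2\<close> have "{p::nat. prime p \<and> p \<le> x} = {}"
        by (auto dest: prime_ge_2_nat)
      then show ?thesis unfolding primorial_def by (subst \<open>_ = {}\<close>) simp
    qed
  next
    case False
    show ?thesis
    proof (cases "prime x")
      case False
      with \<open>\<not> x \<le> 2\<close> have "{p. prime p \<and> p \<le> x} = {p. prime p \<and> p \<le> x - 1}"
        by (auto simp: le_diff_conv2) (metis le_antisym not_less_eq_eq Suc_pred le_neq_implies_less)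
      then have "primorial x = primorial (x - 1)" unfolding primorial_def by simp
      also have "\<dots> \<le> 4 ^ (x - 1)" using less \<open>\<not> x \<le> 2\<close> by auto
      also have "\<dots> \<le> 4 ^ x" by (intro power_increasing) auto
      finally show ?thesis .
    next
      case True
      with \<open>\<not> x \<le> 2\<close> have "odd x" using prime_odd_nat by auto
      then obtain m where xm: "x = 2 * m + 1" by (metis oddE)
      with \<open>\<not> x \<le> 2\<close> have m1: "m \<ge> 1" by auto
      define Q where "Q = \<Prod>{p. prime p \<and> m + 1 < p \<and> p \<le> x}"
      have split: "{p. prime p \<and> p \<le> x} = {p. prime p \<and> p \<le> m + 1} \<union> {p. prime p \<and> m + 1 < p \<and> p \<le> x}"
        using xm by auto
      have "primorial x = primorial (m + 1) * Q"
        unfolding primorial_def Q_def split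
        by (subst prod.union_disjoint) auto
      moreover have "primorial (m + 1) \<le> 4 ^ (m + 1)" using less.IH[of "m+1"] m1 xm by linarith
      moreover have "Q \<le> 4 ^ m"
      proof -
        have "Q dvd (2 * m + 1) choose m"
          unfolding Q_def
        proof (rule prod_primes_dvd)
          fix p assume p: "p \<in> {p. prime p \<and> m + 1 < p \<and> p \<le> x}"
          have "fact m * fact (2 * m + 1 - m) * ((2 * m + 1) choose m) = (fact (2 * m + 1) :: nat)"
            by (rule binomial_fact_lemma) auto
          moreover have "p dvd (fact (2 * m + 1) :: nat)" using p xm prime_dvd_fact_iff[of p "2*m+1"] by blast
          ultimately have "p dvd fact m * fact (m + 1) * ((2 * m + 1) choose m)"
            by (simp add: Suc_diff_le)
          moreover have "\<not> p dvd (fact m :: nat)" "\<not> p dvd (fact (m+1) :: nat)"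
            using p prime_dvd_fact_iff[of p m] prime_dvd_fact_iff[of p "m+1"] by auto
          ultimately show "prime p \<and> p dvd (2 * m + 1) choose m" using p
            by (metis mem_Collect_eq prime_dvd_mult_iff)
        qed auto
        then have "Q \<le> (2 * m + 1) choose m" by (rule dvd_imp_le) simp
        also have "\<dots> \<le> (\<Sum>k\<le>m. (2 * m + 1) choose k)" by (rule member_le_sum) auto
        also have "\<dots> = 4 ^ m" using binomial_r_part_sum[of m] by (simp add: power_mult)
        finally show ?thesis .
      qed
      ultimately have "primorial x \<le> 4 ^ (m + 1) * 4 ^ m" by (metis mult_le_mono)
      also have "\<dots> = 4 ^ x" using xm by (simp add: power_add mult_2 flip: power_add)
      finally show ?thesis .
    qed
  qed
qed

lemma mult_le_of_less_pow:
  fixes p m :: nat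
  assumes "prime p" "m > 0" "m < p ^ (N + 1)"
  shows "multiplicity p m \<le> N"
proof -
  have "p ^ multiplicity p m dvd m" by (rule multiplicity_dvd)
  then have "p ^ multiplicity p m \<le> m" using assms by (intro dvd_imp_le) auto
  then have "p ^ multiplicity p m < p ^ (N + 1)" using assms by linarith
  then have "multiplicity p m < N + 1"
    using assms prime_gt_1_nat power_less_imp_less_exp by blast
  then show ?thesis by simp
qed

lemma card_dvd_set:
  fixes p m :: nat
  assumes "prime p" "m > 0" "m < p ^ (N + 1)"
  shows "card {i \<in> {1..N}. p ^ i dvd m} = multiplicity p m"
proof -
  have "{i \<in> {1..N}. p ^ i dvd m} = {1..multiplicity p m}"
  proof -
    have key: "\<And>x. p ^ x dvd m \<longleftrightarrow> x \<le> multiplicity p m"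
      using assms(1,2) not_prime_unit[of p] power_dvd_iff_le_multiplicity[of m p] by blast
    have "multiplicity p m \<le> N" using mult_le_of_less_pow[OF assms] .
    then show ?thesis unfolding key by auto
  qed
  then show ?thesis by simp
qed

lemma legendre:
  fixes p n :: nat
  assumes "prime p" "n < p ^ (N + 1)"
  shows "multiplicity p (fact n) = (\<Sum>i\<in>{1..N}. n div p ^ i)"
  using assms(2)
proof (induction n)
  case 0
  then show ?case by simp
next
  case (Suc n)
  have ih: "multiplicity p (fact n) = (\<Sum>i\<in>{1..N}. n div p ^ i)" using Suc by simp
  have "multiplicity p (fact (Suc n) :: nat) = multiplicity p (Suc n * fact n)" by simp
  also have "\<dots> = multiplicity p (Suc n) + multiplicity p (fact n :: nat)"
    using assms by (intro prime_elem_multiplicity_mult_distrib) auto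
  also have "multiplicity p (Suc n) = card {i \<in> {1..N}. p ^ i dvd Suc n}"
    using card_dvd_set[OF assms(1) _ Suc.prems] by simp
  also have "\<dots> = (\<Sum>i\<in>{1..N}. if p ^ i dvd Suc n then 1 else 0)"
    by (simp add: sum.inter_filter[symmetric])
  also have "\<dots> + multiplicity p (fact n :: nat) = (\<Sum>i\<in>{1..N}. (if p ^ i dvd Suc n then 1 else 0) + n div p ^ i)"
    by (simp add: ih sum.distrib)
  also have "\<dots> = (\<Sum>i\<in>{1..N}. Suc n div p ^ i)"
    by (intro sum.cong refl) (auto simp: div_Suc dvd_eq_mod_eq_0)
  finally show ?case .
qed

lemma central_mult:
  fixes p n :: nat
  assumes "prime p" "2 * n < p ^ (N + 1)"
  shows "multiplicity p ((2 * n) choose n) + 2 * (\<Sum>i\<in>{1..N}. n div p ^ i) = (\<Sum>i\<in>{1..N}. (2 * n) div p ^ i)"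
proof -
  have f: "fact n * fact (2 * n - n) * ((2 * n) choose n) = (fact (2 * n) :: nat)"
    by (rule binomial_fact_lemma) auto
  have "multiplicity p (fact (2 * n) :: nat) = multiplicity p (fact n * fact n * ((2 * n) choose n) :: nat)"
    using f by simp
  also have "\<dots> = multiplicity p (fact n :: nat) + multiplicity p (fact n :: nat) + multiplicity p ((2 * n) choose n)"
    using assms by (simp add: prime_elem_multiplicity_mult_distrib)
  finally have "multiplicity p (fact (2 * n) :: nat) = 2 * multiplicity p (fact n :: nat) + multiplicity p ((2 * n) choose n)"
    by simp
  moreover have "multiplicity p (fact (2 * n) :: nat) = (\<Sum>i\<in>{1..N}. (2 * n) div p ^ i)"
    using legendre[OF assms] .
  moreover have "multiplicity p (fact n :: nat) = (\<Sum>i\<in>{1..N}. n div p ^ i)"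
    using assms by (intro legendre) auto
  ultimately show ?thesis by simp
qed

lemma central_mult_le:
  fixes p n :: nat
  assumes "prime p" "2 * n < p ^ (N + 1)"
  shows "multiplicity p ((2 * n) choose n) \<le> N"
proof -
  have "(\<Sum>i\<in>{1..N}. (2 * n) div p ^ i) \<le> (\<Sum>i\<in>{1..N}. 2 * (n div p ^ i) + 1)"
  proof (intro sum_mono)
    fix i
    have "2 * n div p ^ i \<le> 2 * (n div p ^ i) + 1"
    proof -
      define d where "d = p ^ i"
      have d0: "d > 0" using assms prime_gt_0_nat d_def by simp
      have e: "d * (n div d) + n mod d = n" by (rule mult_div_mod_eq)
      moreover have "n mod d < d" using d0 by simp
      ultimately have "2 * n < 2 * (d * (n div d)) + 2 * d" by linarith
      then have "2 * n < (2 * (n div d) + 2) * d" by (simp add: algebra_simps)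
      then have "2 * n div d < 2 * (n div d) + 2" by (simp add: less_mult_imp_div_less)
      then show ?thesis unfolding d_def by simp
    qed
    then show "2 * n div p ^ i \<le> 2 * (n div p ^ i) + 1" .
  qed
  also have "\<dots> = 2 * (\<Sum>i\<in>{1..N}. n div p ^ i) + N" by (simp only: sum.distrib sum_distrib_left[symmetric]) simp
  finally show ?thesis using central_mult[OF assms] by linarith
qed

lemma central_pow_le:
  fixes p n :: nat
  assumes "prime p" "n > 0"
  shows "p ^ multiplicity p ((2 * n) choose n) \<le> 2 * n"
proof (rule ccontr)
  let ?m = "multiplicity p ((2 * n) choose n)"
  assume "\<not> ?thesis"
  then have "2 * n < p ^ ?m" by simp
  moreover have "?m > 0" using calculation assms by (cases ?m) auto
  ultimately have "2 * n < p ^ ((?m - 1) + 1)" by simp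
  then have "?m \<le> ?m - 1" using central_mult_le[OF assms(1)] by blast
  with \<open>?m > 0\<close> show False by simp
qed

lemma central_mult_mid:
  fixes p n :: nat
  assumes "prime p" "n \<ge> 5" "2 * n < 3 * p" "p \<le> n"
  shows "multiplicity p ((2 * n) choose n) = 0"
proof -
  have "(2 * n) * (2 * n) < (3 * p) * (3 * p)" using mult_strict_mono[OF assms(3) assms(3)] prime_gt_0_nat[OF assms(1)] by simp
  moreover have "5 * n \<le> n * n" using mult_le_mono1[OF assms(2)] by simp
  ultimately have "2 * n < p * p" by linarith
  then have "2 * n < p ^ (1 + 1)" by (simp add: power2_eq_square)
  from central_mult[OF assms(1) this] have
    "multiplicity p ((2 * n) choose n) + 2 * (n div p) = 2 * n div p" by simp
  moreover have "n div p = 1"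
  proof -
    have "n < p * 2" "p * 1 \<le> n" using assms by linarith+
    then show ?thesis using div_nat_eqI[of p 1 n] by (simp add: numeral_2_eq_2)
  qed
  moreover have "2 * n div p = 2"
  proof -
    have "2 * n < p * 3" "p * 2 \<le> 2 * n" using assms by linarith+
    then show ?thesis using div_nat_eqI[of p 2 "2*n"] by (simp add: numeral_3_eq_3)
  qed
  ultimately show ?thesis by simp
qed

lemma arith72: "j \<ge> 15 \<Longrightarrow> 72 * (j + 2) * (j + 2) < (2::nat) ^ j"
proof (induction j rule: dec_induct)
  case base
  then show ?case by simp
next
  case (step j)
  have "1 \<le> j * 2" using step(1) by linarith
  then have "(j + 3) * (j + 3) \<le> 2 * ((j + 2) * (j + 2))" by (simp add: algebra_simps)
  then have "72 * ((j + 3) * (j + 3)) \<le> 72 * (2 * ((j + 2) * (j + 2)))" by (rule mult_le_mono2)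
  also have "\<dots> = 2 * (72 * (j + 2) * (j + 2))" by (simp only: mult_ac)
  also have "\<dots> < 2 * 2 ^ j" using step(3) by simp
  finally have "72 * ((j + 3) * (j + 3)) < 2 * 2 ^ j" .
  moreover have "Suc j + 2 = j + 3" by simp
  ultimately show ?case by (simp only: mult.assoc power_Suc)
qed

lemma arith_main:
  fixes j :: nat
  assumes "j \<ge> 15"
  shows "3 * (j + 2) * (2 ^ ((j + 3) div 2) + j) < 2 ^ (j + 1)"
proof -
  define t where "t = (j + 3) div 2"
  have t2: "j + 2 \<le> 2 * t" "2 * t \<le> j + 3" unfolding t_def by auto
  have a: "72 * (j + 2) * (j + 2) < (2::nat) ^ j" using arith72[OF assms] .
  have pt: "(2::nat) ^ t * 2 ^ t = 2 ^ (2 * t)" by (simp add: mult_2 power_add)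
  have "j * j < 2 ^ j" using a by (simp add: algebra_simps) 
  also have "(2::nat) ^ j \<le> 2 ^ (2 * t)" using t2 by (intro power_increasing) auto
  finally have "j * j < 2 ^ t * 2 ^ t" using pt by simp
  then have jt: "j \<le> 2 ^ t" by (metis mult_le_mono not_le less_imp_le order.strict_iff_not)
  define X where "X = 3 * (j + 2) * (2 ^ t + j)"
  have "2 ^ t + j \<le> 2 * 2 ^ t" using jt by simp
  then have "3 * (j + 2) * (2 ^ t + j) \<le> 3 * (j + 2) * (2 * 2 ^ t)" by (rule mult_le_mono2)
  also have "3 * (j + 2) * (2 * 2 ^ t) = 6 * (j + 2) * 2 ^ t" by (simp add: algebra_simps)
  finally have "X \<le> 6 * (j + 2) * 2 ^ t" unfolding X_def .
  then have "X * X \<le> (6 * (j + 2) * 2 ^ t) * (6 * (j + 2) * 2 ^ t)" by (intro mult_le_mono)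
  also have "\<dots> = 36 * ((j + 2) * (j + 2)) * 2 ^ (2 * t)" unfolding pt[symmetric] by (simp add: algebra_simps)
  also have "\<dots> \<le> 36 * ((j + 2) * (j + 2)) * 2 ^ (j + 3)" using t2 by (intro mult_le_mono power_increasing) auto
  also have "\<dots> = 4 * (72 * (j + 2) * (j + 2)) * 2 ^ j" by (simp add: power_add algebra_simps)
  also have "\<dots> < 4 * 2 ^ j * 2 ^ j" using a by simp
  also have "\<dots> = 2 ^ (j + 1) * 2 ^ (j + 1)" by (simp add: power_add algebra_simps)
  finally have "X * X < 2 ^ (j + 1) * 2 ^ (j + 1)" .
  then have "X < 2 ^ (j + 1)" by (metis mult_le_mono not_le)
  then show ?thesis unfolding X_def t_def .
qed

definition PI :: "nat \<Rightarrow> nat set" where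
  "PI n = {p. prime p \<and> n < p \<and> p \<le> 2 * n}"

lemma finite_PI: "finite (PI n)" unfolding PI_def by auto

lemma lower_central: "4 ^ n \<le> (2 * n + 1) * ((2 * n) choose n)"
proof -
  have "(4::nat) ^ n = 2 ^ (2 * n)" by (simp add: power_mult)
  also have "\<dots> = (\<Sum>k\<le>2 * n. (2 * n) choose k)" by (simp add: choose_row_sum)
  also have "\<dots> \<le> (\<Sum>k\<le>2 * n. (2 * n) choose n)"
  proof (intro sum_mono)
    fix k show "(2 * n) choose k \<le> (2 * n) choose n" by (rule binomial_maximum')
  qed
  also have "\<dots> = (2 * n + 1) * ((2 * n) choose n)" by simp
  finally show ?thesis .
qed

lemma erdos_count:
  fixes n j :: nat
  assumes j15: "j \<ge> 15" and jn: "2 ^ j \<le> n" "n < 2 ^ (j + 1)"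
  shows "card (PI n) \<ge> j"
proof (rule ccontr)
  assume "\<not> card (PI n) \<ge> j"
  then have cardPI: "card (PI n) < j" by simp
  define C where "C = (2 * n) choose n"
  define t where "t = (j + 3) div 2"
  define B where "B = (2::nat) ^ (j + 2)"
  have n5: "n \<ge> 5"
  proof -
    have "(2::nat) ^ 3 \<le> 2 ^ j" using j15 by (intro power_increasing) auto
    then show ?thesis using jn by simp
  qed
  have C0: "C > 0" unfolding C_def by simp
  have B2n: "2 * n + 1 \<le> B" unfolding B_def using jn by (simp add: power_add)
  define PF where "PF = prime_factors C"
  define f where "f p = p ^ multiplicity p C" for p
  have finPF: "finite PF" unfolding PF_def by simp
  have PFprime: "\<And>p. p \<in> PF \<Longrightarrow> prime p" unfolding PF_def by auto
  have PFmult: "\<And>p. p \<in> PF \<Longrightarrow> multiplicity p C > 0"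
    unfolding PF_def using C0 by (auto simp: prime_factors_multiplicity)
  have Cprod: "C = (\<Prod>p\<in>PF. f p)" unfolding PF_def f_def using prime_factorization_nat[OF C0] .
  define A where "A = {p \<in> PF. p * p \<le> 2 * n}"
  define Bs where "Bs = {p \<in> PF. 2 * n < p * p \<and> p \<le> n}"
  define M where "M = {p \<in> PF. 2 * n < p * p \<and> n < p}"
  have PFsplit: "PF = A \<union> (Bs \<union> M)" unfolding A_def Bs_def M_def by auto
  have finA: "finite A" "finite Bs" "finite M" using finPF unfolding A_def Bs_def M_def by auto
  have d1: "A \<inter> (Bs \<union> M) = {}" "Bs \<inter> M = {}" unfolding A_def Bs_def M_def by auto
  have eqC: "C = (\<Prod>p\<in>A. f p) * ((\<Prod>p\<in>Bs. f p) * (\<Prod>p\<in>M. f p))"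
  proof -
    have "C = prod f (A \<union> (Bs \<union> M))" using Cprod PFsplit by simp
    also have "\<dots> = prod f A * prod f (Bs \<union> M)" using finA d1 by (intro prod.union_disjoint) auto
    also have "prod f (Bs \<union> M) = prod f Bs * prod f M" using finA d1 by (intro prod.union_disjoint) auto
    finally show ?thesis .
  qed
  have hA: "(\<Prod>p\<in>A. f p) \<le> (2 * n) ^ card A"
  proof -
    have "(\<Prod>p\<in>A. f p) \<le> (\<Prod>p\<in>A. 2 * n)"
    proof (intro prod_mono conjI)
      fix p assume "p \<in> A" then have "prime p" using PFprime unfolding A_def by auto
      then show "f p \<le> 2 * n" unfolding f_def C_def using central_pow_le[of p n] n5 by simp
    qed auto
    then show ?thesis by simp
  qed
  have hB: "(\<Prod>p\<in>Bs. f p) \<le> 4 ^ (2 * n div 3)"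
  proof -
    have "(\<Prod>p\<in>Bs. f p) \<le> (\<Prod>p\<in>Bs. p)"
    proof (intro prod_mono conjI)
      fix p assume p: "p \<in> Bs"
      then have pp: "prime p" "2 * n < p ^ (1 + 1)" unfolding Bs_def by (auto simp: PFprime power2_eq_square)
      have "multiplicity p C \<le> 1" unfolding C_def by (rule central_mult_le[OF pp])
      then have "p ^ multiplicity p C \<le> p ^ 1"
        using prime_gt_0_nat[OF pp(1)] by (intro power_increasing) auto
      then show "f p \<le> p" unfolding f_def by simp
    qed auto
    also have "(\<Prod>p\<in>Bs. p) \<le> primorial (2 * n div 3)"
    proof -
      have sub: "Bs \<subseteq> {p. prime p \<and> p \<le> 2 * n div 3}"
      proof
        fix p assume p: "p \<in> Bs"
        then have "prime p" "p \<le> n" "multiplicity p C > 0" unfolding Bs_def using PFprime PFmult by auto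
        then have "\<not> 2 * n < 3 * p"
        proof -
          assume a: "prime p" "p \<le> n" "multiplicity p C > 0"
          show ?thesis
          proof
            assume "2 * n < 3 * p"
            then have "multiplicity p C = 0" unfolding C_def using central_mult_mid[of p n] a n5 by blast
            with a show False by simp
          qed
        qed
        then show "p \<in> {p. prime p \<and> p \<le> 2 * n div 3}" using \<open>prime p\<close> by auto
      qed
      have "(\<Prod>p\<in>Bs. p) dvd primorial (2 * n div 3)"
        unfolding primorial_def using prod_dvd_prod_subset[OF fin_primes_le sub, of "\<lambda>p. p"] by simp
      then show ?thesis by (rule dvd_imp_le) (auto simp: primorial_def prime_gt_0_nat)
    qed
    also have "\<dots> \<le> 4 ^ (2 * n div 3)" by (rule primorial_bound)
    finally show ?thesis .
  qed
  have hM: "(\<Prod>p\<in>M. f p) \<le> (2 * n) ^ card M"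
  proof -
    have "(\<Prod>p\<in>M. f p) \<le> (\<Prod>p\<in>M. 2 * n)"
    proof (intro prod_mono conjI)
      fix p assume "p \<in> M" then have "prime p" using PFprime unfolding M_def by auto
      then show "f p \<le> 2 * n" unfolding f_def C_def using central_pow_le[of p n] n5 by simp
    qed auto
    then show ?thesis by simp
  qed
  have Cle: "C \<le> (2 * n) ^ card A * (4 ^ (2 * n div 3) * (2 * n) ^ card M)"
    unfolding eqC by (intro mult_le_mono hA hB hM)
  have cardM: "card M < j"
  proof -
    have "M \<subseteq> PI n"
    proof
      fix p assume p: "p \<in> M"
      then have "prime p" "n < p" "multiplicity p C > 0" unfolding M_def using PFprime PFmult by auto
      moreover have "p ^ multiplicity p C \<le> 2 * n" unfolding C_def using central_pow_le calculation n5 by auto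
      moreover have "p ^ 1 \<le> p ^ multiplicity p C" using calculation prime_gt_0_nat[of p]
        by (intro power_increasing) auto
      ultimately show "p \<in> PI n" unfolding PI_def by auto
    qed
    then have "card M \<le> card (PI n)" by (intro card_mono finite_PI)
    then show ?thesis using cardPI by simp
  qed
  have cardA: "card A + 1 \<le> 2 ^ t"
  proof -
    have pt: "(2::nat) ^ t * 2 ^ t = 2 ^ (2 * t)" by (simp add: mult_2 power_add)
    have "2 * n < 2 ^ (j + 2)" using jn by (simp add: power_add)
    also have "(2::nat) ^ (j + 2) \<le> 2 ^ (2 * t)" unfolding t_def by (intro power_increasing) auto
    finally have nt: "2 * n < 2 ^ t * 2 ^ t" using pt by simp
    have "A \<subseteq> {1..<2 ^ t}"
    proof
      fix p assume p: "p \<in> A"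
      then have "prime p" "p * p \<le> 2 * n" unfolding A_def using PFprime by auto
      then have "p * p < 2 ^ t * 2 ^ t" using nt by linarith
      then have "p < 2 ^ t"
      proof -
        assume a: "p * p < 2 ^ t * 2 ^ t"
        show ?thesis
        proof (rule ccontr)
          assume "\<not> p < 2 ^ t"
          then have "2 ^ t \<le> p" by simp
          then have "2 ^ t * 2 ^ t \<le> p * p" by (intro mult_le_mono)
          with a show False by simp
        qed
      qed
      then show "p \<in> {1..<2 ^ t}" using prime_gt_1_nat[OF \<open>prime p\<close>] by auto
    qed
    then have "card A \<le> card {1..<(2::nat) ^ t}" by (intro card_mono) auto
    moreover have "(0::nat) < 2 ^ t" by simp
    moreover have "card {1..<(2::nat) ^ t} = 2 ^ t - 1" by simp
    ultimately show ?thesis by arith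
  qed
  have "4 ^ n \<le> (2 * n + 1) * C" unfolding C_def by (rule lower_central)
  also have "\<dots> \<le> B * ((2 * n) ^ card A * (4 ^ (2 * n div 3) * (2 * n) ^ card M))"
    using B2n Cle by (intro mult_le_mono)
  also have "\<dots> \<le> B * (B ^ card A * (4 ^ (2 * n div 3) * B ^ card M))"
    using B2n by (intro mult_le_mono power_mono order.refl) auto
  also have "\<dots> = 4 ^ (2 * n div 3) * B ^ (1 + card A + card M)"
    by (simp add: power_add algebra_simps)
  also have "\<dots> \<le> 4 ^ (2 * n div 3) * B ^ (2 ^ t + j)"
    using cardA cardM unfolding B_def by (intro mult_le_mono order.refl power_increasing) auto
  finally have ineq: "4 ^ n \<le> 4 ^ (2 * n div 3) * B ^ (2 ^ t + j)" .
  have "(4::nat) ^ n = 4 ^ (2 * n div 3) * 4 ^ (n - 2 * n div 3)"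
    by (simp add: power_add[symmetric])
  with ineq have i4: "4 ^ (n - 2 * n div 3) \<le> B ^ (2 ^ t + j)" by simp
  have "(2::nat) ^ (2 * (n - 2 * n div 3)) = 4 ^ (n - 2 * n div 3)" by (simp add: power_mult)
  also have "\<dots> \<le> B ^ (2 ^ t + j)" by (rule i4)
  also have "\<dots> = 2 ^ ((j + 2) * (2 ^ t + j))" unfolding B_def by (simp only: power_mult)
  finally have "(2::nat) ^ (2 * (n - 2 * n div 3)) \<le> 2 ^ ((j + 2) * (2 ^ t + j))" .
  then have e1: "2 * (n - 2 * n div 3) \<le> (j + 2) * (2 ^ t + j)" by simp
  have "2 * n \<le> 3 * (2 * (n - 2 * n div 3))" by linarith
  moreover have "2 ^ (j + 1) \<le> 2 * n" using jn by simp
  ultimately have "2 ^ (j + 1) \<le> 3 * ((j + 2) * (2 ^ t + j))" using e1 by linarith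
  moreover have "3 * (j + 2) * (2 ^ t + j) < 2 ^ (j + 1)" unfolding t_def by (rule arith_main[OF j15])
  ultimately show False by (simp only: mult.assoc)
qed

function pchk :: "nat \<Rightarrow> nat \<Rightarrow> bool" where
  "pchk p d = (if p < d * d \<or> d = 0 then True else (p mod d \<noteq> 0 \<and> pchk p (d + 1)))"
  by auto
termination proof (relation "measure (\<lambda>(p, d). Suc p - d)")
  fix p d :: nat
  assume "\<not> (p < d * d \<or> d = 0)"
  then have "d \<le> p" by (metis le_trans mult_le_mono1 not_le One_nat_def Suc_leI neq0_conv mult_1)
  then show "((p, d + 1), p, d) \<in> measure (\<lambda>(p, d). Suc p - d)" by auto
qed auto
declare pchk.simps[simp del]

lemma pchk_prime:
  "pchk p d \<Longrightarrow> 2 \<le> d \<Longrightarrow> (\<forall>e. 2 \<le> e \<and> e < d \<longrightarrow> \<not> e dvd p) \<Longrightarrow> 2 \<le> p \<Longrightarrow> prime p"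
proof (induction p d rule: pchk.induct)
  case (1 p d)
  show ?case
  proof (cases "p < d * d")
    case True
    show ?thesis unfolding prime_nat_iff
    proof (intro conjI allI impI)
      show "1 < p" using 1 by simp
      fix m assume "m dvd p"
      then obtain k where pk: "p = m * k" by auto
      show "m = 1 \<or> m = p"
      proof (rule ccontr)
        assume "\<not> (m = 1 \<or> m = p)"
        then have m: "m \<noteq> 1" "m \<noteq> p" by auto
        have "m \<noteq> 0" using pk 1(5) by (cases "m = 0") auto
        moreover have "k \<noteq> 0" using pk 1(5) by (cases "k = 0") auto
        moreover have "k \<noteq> 1" using pk m by auto
        ultimately have m2: "2 \<le> m" "2 \<le> k" using m by auto
        define s where "s = min m k"
        have s2: "2 \<le> s" using m2 s_def by simp
        have "s * s \<le> m * k" unfolding s_def by (intro mult_le_mono) auto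
        then have "s < d" using True pk
          by (metis le_less_trans mult_le_mono not_le)
        moreover have "s dvd p" unfolding s_def pk by (cases "m \<le> k") (auto simp: min_def)
        ultimately show False using 1(4) s2 by blast
      qed
    qed
  next
    case False
    with 1(2,3) have md: "p mod d \<noteq> 0" and pc: "pchk p (d + 1)"
      by (subst (asm) pchk.simps, simp)+
    have "\<forall>e. 2 \<le> e \<and> e < d + 1 \<longrightarrow> \<not> e dvd p"
      using 1(4) md by (metis dvd_eq_mod_eq_0 less_Suc_eq Suc_eq_plus1)
    then show ?thesis using 1(1)[OF _ pc] False 1(3,5) by simp
  qed
qed

lemma prime_by_chk: "pchk p 2 \<Longrightarrow> 2 \<le> p \<Longrightarrow> prime p"
  by (rule pchk_prime[of p 2]) auto

lemma pr_2: "prime (2::nat)" by (rule prime_by_chk) (simp_all add: pchk.simps)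
lemma pr_3: "prime (3::nat)" by (rule prime_by_chk) (simp_all add: pchk.simps)
lemma pr_5: "prime (5::nat)" by (rule prime_by_chk) (simp_all add: pchk.simps)
lemma pr_7: "prime (7::nat)" by (rule prime_by_chk) (simp_all add: pchk.simps)
lemma pr_13: "prime (13::nat)" by (rule prime_by_chk) (simp_all add: pchk.simps)
lemma pr_23: "prime (23::nat)" by (rule prime_by_chk) (simp_all add: pchk.simps)
lemma pr_43: "prime (43::nat)" by (rule prime_by_chk) (simp_all add: pchk.simps)
lemma pr_83: "prime (83::nat)" by (rule prime_by_chk) (simp_all add: pchk.simps)
lemma pr_163: "prime (163::nat)" by (rule prime_by_chk) (simp_all add: pchk.simps)
lemma pr_317: "prime (317::nat)" by (rule prime_by_chk) (simp_all add: pchk.simps)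
lemma pr_631: "prime (631::nat)" by (rule prime_by_chk) (simp_all add: pchk.simps)
lemma pr_1259: "prime (1259::nat)" by (rule prime_by_chk) (simp_all add: pchk.simps)
lemma pr_2503: "prime (2503::nat)" by (rule prime_by_chk) (simp_all add: pchk.simps)
lemma pr_5003: "prime (5003::nat)" by (rule prime_by_chk) (simp_all add: pchk.simps)
lemma pr_9973: "prime (9973::nat)" by (rule prime_by_chk) (simp_all add: pchk.simps)
lemma pr_19937: "prime (19937::nat)" by (rule prime_by_chk) (simp_all add: pchk.simps)
lemma pr_39869: "prime (39869::nat)" by (rule prime_by_chk) (simp_all add: pchk.simps)

fun chainok :: "nat list \<Rightarrow> bool" where
  "chainok (a # b # rest) = (a < b \<and> b \<le> 2 * a \<and> chainok (b # rest))"
| "chainok _ = True"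

lemma chain_lemma:
  "chainok (a # rest) \<Longrightarrow> a \<le> n \<Longrightarrow> n < last (a # rest) \<Longrightarrow> \<exists>c\<in>set rest. n < c \<and> c \<le> 2 * n"
proof (induction rest arbitrary: a)
  case Nil
  then show ?case by simp
next
  case (Cons b rest)
  show ?case
  proof (cases "n < b")
    case True
    then show ?thesis using Cons.prems by auto
  next
    case False
    then have "\<exists>c\<in>set rest. n < c \<and> c \<le> 2 * n"
      using Cons.IH[of b] Cons.prems by (cases rest) auto
    then show ?thesis by auto
  qed
qed

lemma bertrand_small:
  fixes n :: nat
  assumes "1 \<le> n" "n < 39869"
  shows "\<exists>p. prime p \<and> n < p \<and> p \<le> 2 * n"
proof -
  let ?L = "[2,3,5,7,13,23,43,83,163,317,631,1259,2503,5003,9973,19937,39869] :: nat list"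
  have "chainok (1 # ?L)" by simp
  moreover have "n < last (1 # ?L)" using assms(2) by simp
  ultimately have "\<exists>c\<in>set ?L. n < c \<and> c \<le> 2 * n" using chain_lemma[of 1 ?L n] assms(1) by blast
  then obtain c where c: "c \<in> set ?L" "n < c" "c \<le> 2 * n" by blast
  have "prime c" using c(1)
    apply (simp only: list.set insert_iff empty_iff)
    apply (elim disjE)
    apply (simp_all only: pr_2 pr_3 pr_5 pr_7 pr_13 pr_23 pr_43 pr_83 pr_163 pr_317 pr_631 pr_1259 pr_2503 pr_5003 pr_9973 pr_19937 pr_39869)
    done
  with c show ?thesis by blast
qed

lemma bertrand:
  fixes n :: nat
  assumes "1 \<le> n"
  shows "\<exists>p. prime p \<and> n < p \<and> p \<le> 2 * n"
proof (cases "n < 39869")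
  case True
  then show ?thesis using bertrand_small assms by blast
next
  case False
  obtain j where j: "2 ^ j \<le> n" "n < 2 ^ (j + 1)" using ex_power_ivl1[of 2 n] assms by auto
  have h15: "(2::nat) ^ 15 < 2 ^ (j + 1)" using j False by simp
  have "15 < j + 1" by (rule power_less_imp_less_exp[of "2::nat"]) (use h15 in simp_all)
  then have "j \<ge> 15" by simp
  from erdos_count[OF this j] have "card (PI n) \<ge> 15" using \<open>j \<ge> 15\<close> by linarith
  then have "PI n \<noteq> {}" by auto
  then show ?thesis unfolding PI_def by auto
qed

lemma bertrand_prime:
  fixes p :: nat
  assumes "prime p"
  shows "\<exists>r. prime r \<and> p < r \<and> r < 2 * p"
proof -
  have p1: "1 < p" using prime_gt_1_nat[OF assms] .
  then have "1 \<le> p" by simp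
  from bertrand[OF this] obtain r where r: "prime r" "p < r" "r \<le> 2 * p" by blast
  have "r \<noteq> 2 * p"
  proof
    assume r2: "r = 2 * p"
    then have "2 dvd r" by simp
    then have "r = 2" using r(1) primes_dvd_imp_eq[of 2 r] by simp
    with r2 p1 show False by simp
  qed
  with r show ?thesis by (intro exI[of _ r]) simp
qed

lemma many_primes_PI: "\<exists>z. K \<le> z \<and> K \<le> card (PI z)"
proof -
  define j where "j = K + 15"
  have jK: "15 \<le> j" "K \<le> j" by (simp_all add: j_def)
  have jj: "j < 2 ^ j" by (rule less_exp)
  have c: "j \<le> card (PI (2 ^ j))" by (rule erdos_count) (use jK in simp_all)
  have "K \<le> 2 ^ j" using jK jj by linarith
  moreover have "K \<le> card (PI (2 ^ j))" using jK c by linarith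
  ultimately show ?thesis by blast
qed

abbreviation g :: "nat \<Rightarrow> nat" where "g p \<equiv> largest_prime_below (2 * p)"

lemma lpb:
  assumes "prime p"
  shows "prime (g p) \<and> g p < 2 * p \<and> p < g p \<and> (\<forall>r. prime r \<and> r < 2 * p \<longrightarrow> r \<le> g p)"
proof -
  let ?P = "\<lambda>r. prime r \<and> r < 2 * p"
  have p0: "p > 0" using prime_gt_0_nat[OF assms] .
  have Pp: "?P p" using assms p0 by simp
  have bd: "\<And>y. ?P y \<Longrightarrow> y \<le> 2 * p" by simp
  have g1: "?P (g p)" unfolding largest_prime_below_def by (rule GreatestI_nat[of ?P p "2 * p", OF Pp bd])
  have g2: "\<And>r. ?P r \<Longrightarrow> r \<le> g p" unfolding largest_prime_below_def by (rule Greatest_le_nat[of ?P _ "2 * p", OF _ bd])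
  obtain r where r: "prime r" "p < r" "r < 2 * p" using bertrand_prime[OF assms] by blast
  have "r \<le> g p" using g2 r by blast
  then have "p < g p" using r by simp
  then show ?thesis using g1 g2 by blast
qed

definition hq :: "nat \<Rightarrow> nat" where "hq r = (LEAST q. prime q \<and> 2 * q > r)"

lemma hq_props:
  assumes "prime r"
  shows "prime (hq r) \<and> r < 2 * hq r \<and> (\<forall>q. prime q \<and> r < 2 * q \<longrightarrow> hq r \<le> q)"
proof -
  have w: "prime r \<and> r < 2 * r" using assms prime_gt_0_nat[OF assms] by simp
  show ?thesis unfolding hq_def using LeastI[of "\<lambda>q. prime q \<and> 2 * q > r", OF w] Least_le[of "\<lambda>q. prime q \<and> 2 * q > r"]
    by blast
qed

lemma RPR_hq: "prime r \<Longrightarrow> RPR_prime r \<longleftrightarrow> (\<exists>s. prime s \<and> r < s \<and> s < 2 * hq r)"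
  unfolding RPR_prime_def hq_def Let_def by simp

lemma nonRPR_witness:
  assumes "prime r" "\<not> RPR_prime r"
  shows "hq r < r \<and> g (hq r) = r"
proof -
  have H: "prime (hq r)" "r < 2 * hq r" "\<And>q. prime q \<Longrightarrow> r < 2 * q \<Longrightarrow> hq r \<le> q"
    using hq_props[OF assms(1)] by blast+
  have nos: "\<And>s. prime s \<Longrightarrow> r < s \<Longrightarrow> s < 2 * hq r \<Longrightarrow> False"
    using RPR_hq[OF assms(1)] assms(2) by blast
  have L: "prime (g (hq r)) \<and> g (hq r) < 2 * hq r \<and> hq r < g (hq r) \<and> (\<forall>s. prime s \<and> s < 2 * hq r \<longrightarrow> s \<le> g (hq r))"
    using lpb[OF H(1)] .
  have "r \<le> g (hq r)" using L assms(1) H(2) by blast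
  moreover have "g (hq r) \<le> r"
  proof (rule ccontr)
    assume "\<not> g (hq r) \<le> r"
    then show False using nos[of "g (hq r)"] L by simp
  qed
  ultimately have geq: "g (hq r) = r" by simp
  have "hq r < r"
  proof (cases "r = 2")
    case True
    have "hq r \<le> 2" using H(3)[of 2] True by simp
    moreover have "hq r \<ge> 2" using H(1) prime_ge_2_nat by blast
    ultimately have "hq r = 2" by simp
    then show ?thesis using nos[of 3] True by simp
  next
    case False
    then have "odd r" using assms(1) prime_odd_nat prime_ge_2_nat[OF assms(1)] by force
    then obtain m where rm: "r = 2 * m + 1" by (metis oddE)
    have "m \<ge> 1" using rm prime_ge_2_nat[OF assms(1)] by simp
    then obtain q where q: "prime q" "m < q" "q \<le> 2 * m" using bertrand by blast
    have "hq r \<le> q" using H(3)[OF q(1)] q(2) rm by simp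
    then show ?thesis using q(3) rm by simp
  qed
  with geq show ?thesis by simp
qed

lemma RPR_char:
  "RPR_prime r \<longleftrightarrow> prime r \<and> \<not> (\<exists>p. prime p \<and> p < r \<and> g p = r)"
proof
  assume R: "RPR_prime r"
  then have pr: "prime r" unfolding RPR_prime_def by simp
  then obtain s where s: "prime s" "r < s" "s < 2 * hq r" using RPR_hq R by blast
  have H: "\<And>q. prime q \<Longrightarrow> r < 2 * q \<Longrightarrow> hq r \<le> q" using hq_props[OF pr] by blast
  show "prime r \<and> \<not> (\<exists>p. prime p \<and> p < r \<and> g p = r)"
  proof (intro conjI notI)
    show "prime r" by fact
    assume "\<exists>p. prime p \<and> p < r \<and> g p = r"
    then obtain p where p: "prime p" "p < r" "g p = r" by blast
    have L: "g p < 2 * p" "\<forall>s. prime s \<and> s < 2 * p \<longrightarrow> s \<le> g p" using lpb[OF p(1)] by blast+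
    have "r < 2 * p" using L(1) p(3) by simp
    then have "hq r \<le> p" using H p(1) by blast
    then have "s < 2 * p" using s(3) by simp
    then have "s \<le> r" using L(2) s(1) p(3) by blast
    then show False using s(2) by simp
  qed
next
  assume A: "prime r \<and> \<not> (\<exists>p. prime p \<and> p < r \<and> g p = r)"
  show "RPR_prime r"
  proof (rule ccontr)
    assume "\<not> RPR_prime r"
    from nonRPR_witness[OF _ this] A have "hq r < r" "g (hq r) = r" by auto
    moreover have "prime (hq r)" using hq_props A by blast
    ultimately show False using A by blast
  qed
qed

lemma seqS_prime: "prime a \<Longrightarrow> prime (seqS a j)"
  by (induction j) (auto dest: lpb)

lemma seqS_nonRPR: "prime a \<Longrightarrow> \<not> RPR_prime (seqS a (Suc j))"
proof -
  assume a: "prime a"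
  have pj: "prime (seqS a j)" using seqS_prime[OF a] .
  have "seqS a j < seqS a (Suc j)" using lpb[OF pj] by simp
  then show ?thesis unfolding RPR_char using pj by auto
qed

definition PP :: "nat \<Rightarrow> nat \<Rightarrow> nat set" where "PP a b = {p. prime p \<and> a < p \<and> p \<le> b}"

lemma finite_PP: "finite (PP a b)" unfolding PP_def by (rule finite_subset[of _ "{..b}"]) auto

lemma PP_split: "a \<le> b \<Longrightarrow> b \<le> c \<Longrightarrow> card (PP a c) = card (PP a b) + card (PP b c)"
proof -
  assume ab: "a \<le> b" "b \<le> c"
  have "PP a c = PP a b \<union> PP b c" unfolding PP_def using ab by auto
  moreover have "PP a b \<inter> PP b c = {}" unfolding PP_def by auto
  ultimately show ?thesis using finite_PP by (simp add: card_Un_disjoint)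
qed

lemma RPR_infinite: "infinite {p. RPR_prime p}"
proof
  assume fin: "finite {p. RPR_prime p}"
  then obtain N where N: "\<And>r. RPR_prime r \<Longrightarrow> r \<le> N"
    unfolding finite_nat_set_iff_bounded_le by auto
  obtain z where z: "3 * N + 2 \<le> z" "3 * N + 2 \<le> card (PI z)" using many_primes_PI by blast
  define z' where "z' = (LEAST q. prime q \<and> z < q)"
  obtain q0 where q0: "prime q0" "z < q0" using bigger_prime by blast
  have z'p: "prime z'" "z < z'" unfolding z'_def using LeastI[of "\<lambda>q. prime q \<and> z < q", OF conjI[OF q0]] by auto
  have z'l: "\<And>q. prime q \<Longrightarrow> z < q \<Longrightarrow> z' \<le> q" unfolding z'_def by (rule Least_le) simp
  define A where "A = PP (2 * N) (2 * z)"
  define B where "B = insert z' (PP N z)"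
  have hA: "\<And>r. r \<in> A \<Longrightarrow> hq r < r \<and> g (hq r) = r"
  proof -
    fix r assume "r \<in> A"
    then have r: "prime r" "2 * N < r" unfolding A_def PP_def by auto
    then have "\<not> RPR_prime r" using N[of r] by linarith
    then show "hq r < r \<and> g (hq r) = r" using nonRPR_witness[OF r(1)] by blast
  qed
  have inj: "inj_on hq A"
  proof (rule inj_onI)
    fix x y assume "x \<in> A" "y \<in> A" "hq x = hq y"
    then show "x = y" using hA by metis
  qed
  have img: "hq ` A \<subseteq> B"
  proof
    fix q assume "q \<in> hq ` A"
    then obtain r where r: "r \<in> A" "q = hq r" by blast
    then have rp: "prime r" "2 * N < r" "r \<le> 2 * z" unfolding A_def PP_def by auto
    have H: "prime (hq r)" "r < 2 * hq r" "\<And>q. prime q \<Longrightarrow> r < 2 * q \<Longrightarrow> hq r \<le> q"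
      using hq_props[OF rp(1)] by blast+
    have "hq r > N" using H(2) rp(2) by linarith
    moreover have "hq r \<le> z'" using H(3)[OF z'p(1)] z'p(2) rp(3) by linarith
    moreover have "z < hq r \<Longrightarrow> z' \<le> hq r" using z'l H(1) by blast
    ultimately show "q \<in> B" unfolding B_def PP_def using H(1) r(2) by fastforce
  qed
  have "card A \<le> card B" using card_inj_on_le[OF inj img] finite_PP unfolding B_def by simp
  also have "\<dots> \<le> card (PP N z) + 1" unfolding B_def using card_insert_le_m1 finite_PP
    by (simp add: card_insert_if)
  finally have c1: "card A \<le> card (PP N z) + 1" .
  have "card A = card (PP (2 * N) z) + card (PP z (2 * z))" unfolding A_def using z by (intro PP_split) auto
  moreover have "card (PP N z) = card (PP N (2 * N)) + card (PP (2 * N) z)" using z by (intro PP_split) auto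
  moreover have "card (PP N (2 * N)) \<le> N"
  proof -
    have "PP N (2 * N) \<subseteq> {N<..2 * N}" unfolding PP_def by auto
    then have "card (PP N (2 * N)) \<le> card {N<..2 * N}" by (intro card_mono) auto
    then show ?thesis by simp
  qed
  moreover have "card (PP z (2 * z)) = card (PI z)" unfolding PP_def PI_def by simp
  ultimately have "card (PI z) \<le> N + 1" using c1 by linarith
  with z(2) show False by linarith
qed

abbreviation en :: "nat \<Rightarrow> nat" where "en \<equiv> enumerate {p. RPR_prime p}"

definition Inv :: "nat \<Rightarrow> bool" where
  "Inv k \<longleftrightarrow> (\<forall>x\<in>Ucov k. prime x) \<and> (\<forall>x\<in>Ucov k. g x \<in> Ucov k) \<and> {x \<in> Ucov k. RPR_prime x} = en ` {..<k}"

lemma least_from_inv: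
  assumes I: "Inv k"
  shows "(LEAST p. prime p \<and> p \<notin> Ucov k) = en k"
proof -
  have inf: "infinite {p. RPR_prime p}" by (rule RPR_infinite)
  have ekR: "RPR_prime (en k)" using enumerate_in_set[OF inf] by simp
  then have ekp: "prime (en k)" unfolding RPR_prime_def by simp
  have I1: "\<And>x. x \<in> Ucov k \<Longrightarrow> g x \<in> Ucov k" and I2: "{x \<in> Ucov k. RPR_prime x} = en ` {..<k}"
    using I unfolding Inv_def by blast+
  have notin: "en k \<notin> Ucov k"
  proof
    assume "en k \<in> Ucov k"
    then have "en k \<in> en ` {..<k}" using I2 ekR by blast
    then obtain i where "i < k" "en k = en i" by auto
    then show False using enumerate_mono[OF _ inf, of i k] by simp
  qed
  have below: "\<And>p. prime p \<Longrightarrow> p < en k \<Longrightarrow> p \<in> Ucov k"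
  proof -
    fix p
    show "prime p \<Longrightarrow> p < en k \<Longrightarrow> p \<in> Ucov k"
    proof (induction p rule: less_induct)
      case (less p)
      show ?case
      proof (cases "RPR_prime p")
        case True
        then obtain i where i: "en i = p" using enumerate_Ex[OF inf, of p] by auto
        then have "i < k" using less.prems(2) enumerate_mono_iff[OF inf] by metis
        then have "p \<in> en ` {..<k}" using i by auto
        then show ?thesis using I2 by blast
      next
        case False
        then obtain p' where p': "prime p'" "p' < p" "g p' = p" using RPR_char less.prems(1) by blast
        then have "p' \<in> Ucov k" using less.IH[of p'] less.prems(2) by simp
        then show ?thesis using I1 p'(3) by force
      qed
    qed
  qed
  show ?thesis
  proof (rule Least_equality)
    show "prime (en k) \<and> en k \<notin> Ucov k" using ekp notin by simp
    fix y assume "prime y \<and> y \<notin> Ucov k"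
    then show "en k \<le> y" using below by (meson not_le)
  qed
qed

lemma inv_all: "Inv k"
proof (induction k)
  case 0
  show ?case unfolding Inv_def by simp
next
  case (Suc k)
  have L: "(LEAST p. prime p \<and> p \<notin> Ucov k) = en k" by (rule least_from_inv[OF Suc.IH])
  have U: "Ucov (Suc k) = Ucov k \<union> range (seqS (en k))" using L by simp
  have inf: "infinite {p. RPR_prime p}" by (rule RPR_infinite)
  have ekR: "RPR_prime (en k)" using enumerate_in_set[OF inf] by simp
  then have ekp: "prime (en k)" unfolding RPR_prime_def by simp
  have I0: "\<forall>x\<in>Ucov k. prime x" and I1: "\<forall>x\<in>Ucov k. g x \<in> Ucov k"
    and I2: "{x \<in> Ucov k. RPR_prime x} = en ` {..<k}"
    using Suc.IH unfolding Inv_def by blast+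
  have P: "\<forall>x\<in>Ucov (Suc k). prime x" unfolding U using I0 seqS_prime[OF ekp] by auto
  have C: "\<forall>x\<in>Ucov (Suc k). g x \<in> Ucov (Suc k)"
  proof
    fix x assume "x \<in> Ucov (Suc k)"
    then consider "x \<in> Ucov k" | j where "x = seqS (en k) j" unfolding U by blast
    then show "g x \<in> Ucov (Suc k)"
    proof cases
      case 1 then show ?thesis using I1 unfolding U by blast
    next
      case 2
      then have "g x = seqS (en k) (Suc j)" by simp
      then show ?thesis unfolding U by blast
    qed
  qed
  have R1: "{x \<in> range (seqS (en k)). RPR_prime x} = {en k}"
  proof
    show "{x \<in> range (seqS (en k)). RPR_prime x} \<subseteq> {en k}"
    proof
      fix x assume "x \<in> {x \<in> range (seqS (en k)). RPR_prime x}"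
      then obtain j where j: "x = seqS (en k) j" "RPR_prime x" by blast
      show "x \<in> {en k}"
      proof (cases j)
        case 0 then show ?thesis using j by simp
      next
        case (Suc j') then show ?thesis using j seqS_nonRPR[OF ekp, of j'] by simp
      qed
    qed
  next
    have "en k = seqS (en k) 0" by simp
    then show "{en k} \<subseteq> {x \<in> range (seqS (en k)). RPR_prime x}" using ekR by blast
  qed
  have "{x \<in> Ucov (Suc k). RPR_prime x} = {x \<in> Ucov k. RPR_prime x} \<union> {x \<in> range (seqS (en k)). RPR_prime x}"
    unfolding U by blast
  also have "\<dots> = en ` {..<Suc k}" unfolding I2 R1 lessThan_Suc by auto
  finally show ?case unfolding Inv_def using P C by blast
qed

theorem theorem1:
  fixes n :: nat
  assumes "n \<ge> 1"
  shows "pseq n = RPR n"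
  unfolding pseq_def RPR_def using least_from_inv[OF inv_all] by simp

end
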